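(* Let $A,B,C$ be non-collinear points of the real affine plane. Let $A^{+},A^{-}$ be points on line $\overleftrightarrow{BC}$, let $B^{+},B^{-}$ be points on line $\overleftrightarrow{CA}$, and let $C^{+},C^{-}$ be points on line $\overleftrightarrow{AB}$, with $A^{+}\neq C$, $A^{-}\neq B$, $B^{+}\neq A$, $B^{-}\neq C$, $C^{+}\neq B$, $C^{-}\neq A$. Define the real numbers $$a^{+}=\frac{|BA^{+}|}{|A^{+}C|},\quad b^{+}=\frac{|CB^{+}|}{|B^{+}A|},\quad c^{+}=\frac{|AC^{+}|}{|C^{+}B|},\quad a^{-}=\frac{|CA^{-}|}{|A^{-}B|},\quad b^{-}=\frac{|AB^{-}|}{|B^{-}C|},\quad c^{-}=\frac{|BC^{-}|}{|C^{-}A|}.$$ Then (under these hypotheses $B^{+}\neq C^{-}$, $C^{+}\neq A^{-}$, $A^{+}\neq B^{-}$, so the lines below are well defined) the three lines $\overleftrightarrow{B^{+}C^{-}}$, $\overleftrightarrow{C^{+}A^{-}}$, $\overleftrightarrow{A^{+}B^{-}}$ pass through a common point of the projective plane (i.e. they are concurrent at a finite point, or are mutually parallel) if and only if $$a^{+}b^{+}c^{+}+a^{-}b^{-}c^{-}=1-a^{+}a^{-}-b^{+}b^{-}-c^{+}c^{-}.$$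
   Context: Segment lengths are signed: for distinct points $P,Q,R$ on one of the lines $\overleftrightarrow{AB}$, $\overleftrightarrow{BC}$, $\overleftrightarrow{CA}$, $|PQ|$ denotes the signed length, positive when $\overrightarrow{PQ}$ points in the direction of $\overrightarrow{AB}$, $\overrightarrow{BC}$, $\overrightarrow{CA}$ respectively; ratios $|PX|/|XQ|$ of collinear signed lengths are thus well-defined real numbers, with $|PP|/|PQ|=0$. Equivalently, e.g. $A^{+}=(B+a^{+}C)/(1+a^{+})$ and $A^{-}=(a^{-}B+C)/(1+a^{-})$ as vectors, and similarly for the other points. *)

theory Defs
  imports "HOL-Analysis.Analysis"
begin

type_synonym point = "real ^ 2"

text \<open>Signed ratio |PX|/|XQ| of collinear signed lengths: the unique real t with
  X - P = t (Q - X) (well defined for X \<noteq> Q and P, X, Q collinear).\<close>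
definition sratio :: "point \<Rightarrow> point \<Rightarrow> point \<Rightarrow> real" where
  "sratio P X Q = (THE t. X - P = t *\<^sub>R (Q - X))"

definition line :: "point \<Rightarrow> point \<Rightarrow> point set" where
  "line P Q = affine hull {P, Q}"

definition proj_concurrent ::
  "point \<Rightarrow> point \<Rightarrow> point \<Rightarrow> point \<Rightarrow> point \<Rightarrow> point \<Rightarrow> bool" where
  "proj_concurrent P1 Q1 P2 Q2 P3 Q3 \<longleftrightarrow>
     (\<exists>X. X \<in> line P1 Q1 \<and> X \<in> line P2 Q2 \<and> X \<in> line P3 Q3) \<or>
     (collinear {0, Q1 - P1, Q2 - P2} \<and> collinear {0, Q2 - P2, Q3 - P3}
      \<and> collinear {0, Q1 - P1, Q3 - P3})"

end

theory Submission
  imports Defs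
begin

lemma col2: "collinear {0, u, v::real^2} \<longleftrightarrow> u$1 * v$2 = u$2 * v$1"
proof
  assume "collinear {0, u, v}"
  then show "u$1 * v$2 = u$2 * v$1" unfolding collinear_lemma by auto
next
  assume h: "u$1 * v$2 = u$2 * v$1"
  show "collinear {0, u, v}" unfolding collinear_lemma
  proof (cases "u = 0")
    case False
    then have "u$1 \<noteq> 0 \<or> u$2 \<noteq> 0" by (metis exhaust_2 vec_eq_iff zero_index)
    then have "\<exists>c. v = c *\<^sub>R u"
    proof
      assume "u$1 \<noteq> 0"
      then have "v = (v$1 / u$1) *\<^sub>R u" using h
        unfolding vec_eq_iff forall_2 by (auto simp: field_simps)
      then show ?thesis by blast
    next
      assume "u$2 \<noteq> 0"
      then have "v = (v$2 / u$2) *\<^sub>R u" using h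
        unfolding vec_eq_iff forall_2 by (auto simp: field_simps)
      then show ?thesis by blast
    qed
    then show "u = 0 \<or> v = 0 \<or> (\<exists>c. v = c *\<^sub>R u)" by blast
  qed simp
qed

lemma line_eq: assumes "P \<noteq> Q"
  shows "X \<in> line P Q \<longleftrightarrow> (Q$1-P$1) * (X$2-P$2) = (Q$2-P$2) * (X$1-P$1)"
proof -
  have "X \<in> line P Q \<longleftrightarrow> collinear {P,Q,X}"
    unfolding line_def using collinear_3_affine_hull[OF assms] by simp
  also have "\<dots> \<longleftrightarrow> collinear {0, P - Q, X - Q}" by (rule collinear_3) simp
  also have "\<dots> \<longleftrightarrow> (Q$1-P$1) * (X$2-P$2) = (Q$2-P$2) * (X$1-P$1)"
    unfolding col2 by (simp add: algebra_simps) argo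
  finally show ?thesis .
qed

lemma sratio_prop:
  assumes "P \<noteq> Q" "X \<in> line P Q" "X \<noteq> Q"
  shows "X - P = sratio P X Q *\<^sub>R (Q - X) \<and> 1 + sratio P X Q \<noteq> 0"
proof -
  obtain u v where uv: "X = u *\<^sub>R P + v *\<^sub>R Q" "u + v = 1"
    using assms(2) unfolding line_def affine_hull_2 by blast
  have u: "u \<noteq> 0" using uv assms(3) by auto
  have e: "X - P = (v/u) *\<^sub>R (Q - X)"
  proof -
    have u1: "u = 1 - v" "v = 1 - u" using uv(2) by auto
    have "X - P = v *\<^sub>R (Q - P)" unfolding uv(1) u1(1) by (simp add: algebra_simps)
    moreover have "Q - X = u *\<^sub>R (Q - P)" unfolding uv(1) u1(2) by (simp add: algebra_simps)
    ultimately show ?thesis using u by simp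
  qed
  have QX: "Q - X \<noteq> 0" using assms(3) by simp
  have "sratio P X Q = v/u" unfolding sratio_def
  proof (rule the_equality)
    fix t assume "X - P = t *\<^sub>R (Q - X)"
    with e have "(t - v/u) *\<^sub>R (Q - X) = 0" by (simp add: algebra_simps)
    with QX show "t = v/u" by simp
  qed (rule e)
  with e have e2: "X - P = sratio P X Q *\<^sub>R (Q - X)" by simp
  moreover have "1 + sratio P X Q \<noteq> 0"
  proof
    assume "1 + sratio P X Q = 0"
    then have "sratio P X Q = -1" by simp
    with e2 have "X - P = X - Q" by simp
    with assms(1) show False by simp
  qed
  ultimately show ?thesis by blast
qed

definition la :: "point \<Rightarrow> point \<Rightarrow> real" where "la P Q = P$2 - Q$2"
definition lb :: "point \<Rightarrow> point \<Rightarrow> real" where "lb P Q = Q$1 - P$1"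
definition lc :: "point \<Rightarrow> point \<Rightarrow> real" where "lc P Q = (Q$2 - P$2) * P$1 - (Q$1 - P$1) * P$2"
definition det3 :: "real \<Rightarrow> real \<Rightarrow> real \<Rightarrow> real \<Rightarrow> real \<Rightarrow> real \<Rightarrow> real \<Rightarrow> real \<Rightarrow> real \<Rightarrow> real" where
  "det3 a1 b1 c1 a2 b2 c2 a3 b3 c3 = a1*(b2*c3-b3*c2) - b1*(a2*c3-a3*c2) + c1*(a2*b3-a3*b2)"

lemma cram: "(m::real) \<noteq> 0 \<Longrightarrow> a*(p/m) + b*(q/m) + c = (a*p + b*q + c*m)/m"
  by (simp add: field_simps)

lemma conc_real:
  fixes a1 b1 c1 a2 b2 c2 a3 b3 c3 :: real
  shows "((\<exists>x y. a1*x+b1*y+c1=0 \<and> a2*x+b2*y+c2=0 \<and> a3*x+b3*y+c3=0) \<or>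
     (a1*b2=a2*b1 \<and> a2*b3=a3*b2 \<and> a1*b3=a3*b1)) \<longleftrightarrow> det3 a1 b1 c1 a2 b2 c2 a3 b3 c3 = 0"
proof
  assume "(\<exists>x y. a1*x+b1*y+c1=0 \<and> a2*x+b2*y+c2=0 \<and> a3*x+b3*y+c3=0) \<or>
     (a1*b2=a2*b1 \<and> a2*b3=a3*b2 \<and> a1*b3=a3*b1)"
  then show "det3 a1 b1 c1 a2 b2 c2 a3 b3 c3 = 0"
  proof
    assume "\<exists>x y. a1*x+b1*y+c1=0 \<and> a2*x+b2*y+c2=0 \<and> a3*x+b3*y+c3=0"
    then obtain x y where g: "a1*x+b1*y+c1=0" "a2*x+b2*y+c2=0" "a3*x+b3*y+c3=0" by blast
    have h: "c1 = -(a1*x+b1*y)" "c2 = -(a2*x+b2*y)" "c3 = -(a3*x+b3*y)" using g by linarith+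
    show ?thesis unfolding det3_def h by algebra
  next
    assume h: "a1*b2=a2*b1 \<and> a2*b3=a3*b2 \<and> a1*b3=a3*b1"
    have "det3 a1 b1 c1 a2 b2 c2 a3 b3 c3 = c1*(a2*b3-a3*b2) - c2*(a1*b3-a3*b1) + c3*(a1*b2-a2*b1)"
      unfolding det3_def by algebra
    then show ?thesis using h by simp
  qed
next
  assume d: "det3 a1 b1 c1 a2 b2 c2 a3 b3 c3 = 0"
  show "(\<exists>x y. a1*x+b1*y+c1=0 \<and> a2*x+b2*y+c2=0 \<and> a3*x+b3*y+c3=0) \<or>
     (a1*b2=a2*b1 \<and> a2*b3=a3*b2 \<and> a1*b3=a3*b1)"
  proof (cases "a1*b2=a2*b1 \<and> a2*b3=a3*b2 \<and> a1*b3=a3*b1")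
    case False
    then consider "a1*b2 \<noteq> a2*b1" | "a2*b3 \<noteq> a3*b2" | "a1*b3 \<noteq> a3*b1" by blast
    then show ?thesis
    proof cases
      case 1
      define m where "m = a1*b2 - a2*b1"
      have m: "m \<noteq> 0" using 1 unfolding m_def by simp
      define x where "x = (b1*c2 - b2*c1)/m"
      define y where "y = (a2*c1 - a1*c2)/m"
      have "a1*x+b1*y+c1=0" using m unfolding x_def y_def cram[OF m] by (simp add: m_def) algebra
      moreover have "a2*x+b2*y+c2=0" using m unfolding x_def y_def cram[OF m] by (simp add: m_def) algebra
      moreover have "a3*x+b3*y+c3=0" using m d unfolding x_def y_def cram[OF m] det3_def by (simp add: m_def) algebra
      ultimately show ?thesis by blast
    next
      case 2
      define m where "m = a2*b3 - a3*b2"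
      have m: "m \<noteq> 0" using 2 unfolding m_def by simp
      define x where "x = (b2*c3 - b3*c2)/m"
      define y where "y = (a3*c2 - a2*c3)/m"
      have "a2*x+b2*y+c2=0" using m unfolding x_def y_def cram[OF m] by (simp add: m_def) algebra
      moreover have "a3*x+b3*y+c3=0" using m unfolding x_def y_def cram[OF m] by (simp add: m_def) algebra
      moreover have "a1*x+b1*y+c1=0" using m d unfolding x_def y_def cram[OF m] det3_def by (simp add: m_def) algebra
      ultimately show ?thesis by blast
    next
      case 3
      define m where "m = a1*b3 - a3*b1"
      have m: "m \<noteq> 0" using 3 unfolding m_def by simp
      define x where "x = (b1*c3 - b3*c1)/m"
      define y where "y = (a3*c1 - a1*c3)/m"
      have "a1*x+b1*y+c1=0" using m unfolding x_def y_def cram[OF m] by (simp add: m_def) algebra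
      moreover have "a3*x+b3*y+c3=0" using m unfolding x_def y_def cram[OF m] by (simp add: m_def) algebra
      moreover have "a2*x+b2*y+c2=0" using m d unfolding x_def y_def cram[OF m] det3_def by (simp add: m_def) algebra
      ultimately show ?thesis by blast
    qed
  qed simp
qed

lemma line_eq2: "P \<noteq> Q \<Longrightarrow> X \<in> line P Q \<longleftrightarrow> la P Q * X$1 + lb P Q * X$2 + lc P Q = 0"
  unfolding line_eq la_def lb_def lc_def by (auto simp: algebra_simps)

lemma par_eq: "collinear {0, Q1 - P1, Q2 - P2} \<longleftrightarrow> la P1 Q1 * lb P2 Q2 = la P2 Q2 * lb P1 Q1"
  unfolding col2 la_def lb_def by (auto simp: algebra_simps)

lemma conc:
  assumes "P1 \<noteq> Q1" "P2 \<noteq> Q2" "P3 \<noteq> Q3"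
  shows "proj_concurrent P1 Q1 P2 Q2 P3 Q3 \<longleftrightarrow>
    det3 (la P1 Q1) (lb P1 Q1) (lc P1 Q1) (la P2 Q2) (lb P2 Q2) (lc P2 Q2) (la P3 Q3) (lb P3 Q3) (lc P3 Q3) = 0"
proof -
  have ex: "(\<exists>X. X \<in> line P1 Q1 \<and> X \<in> line P2 Q2 \<and> X \<in> line P3 Q3) \<longleftrightarrow>
    (\<exists>x y. la P1 Q1*x+lb P1 Q1*y+lc P1 Q1=0 \<and> la P2 Q2*x+lb P2 Q2*y+lc P2 Q2=0 \<and> la P3 Q3*x+lb P3 Q3*y+lc P3 Q3=0)"
  proof
    assume "\<exists>X. X \<in> line P1 Q1 \<and> X \<in> line P2 Q2 \<and> X \<in> line P3 Q3"
    then obtain X where "X \<in> line P1 Q1 \<and> X \<in> line P2 Q2 \<and> X \<in> line P3 Q3" by blast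
    then show "\<exists>x y. la P1 Q1*x+lb P1 Q1*y+lc P1 Q1=0 \<and> la P2 Q2*x+lb P2 Q2*y+lc P2 Q2=0 \<and> la P3 Q3*x+lb P3 Q3*y+lc P3 Q3=0"
      using assms by (auto simp: line_eq2)
  next
    assume "\<exists>x y. la P1 Q1*x+lb P1 Q1*y+lc P1 Q1=0 \<and> la P2 Q2*x+lb P2 Q2*y+lc P2 Q2=0 \<and> la P3 Q3*x+lb P3 Q3*y+lc P3 Q3=0"
    then obtain x y where "la P1 Q1*x+lb P1 Q1*y+lc P1 Q1=0 \<and> la P2 Q2*x+lb P2 Q2*y+lc P2 Q2=0 \<and> la P3 Q3*x+lb P3 Q3*y+lc P3 Q3=0" by blast
    then have "vector [x,y] \<in> line P1 Q1 \<and> vector [x,y] \<in> line P2 Q2 \<and> vector [x,y] \<in> line P3 Q3"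
      using assms by (simp add: line_eq2)
    then show "\<exists>X. X \<in> line P1 Q1 \<and> X \<in> line P2 Q2 \<and> X \<in> line P3 Q3" by blast
  qed
  show ?thesis unfolding proj_concurrent_def ex par_eq conc_real[symmetric] by auto
qed

lemma poly_id:
  fixes A1 A2 B1 B2 C1 C2 ap bp cp am bm cm :: real
  shows "det3
  ((C2 + bp*A2)*(1+cm) - (1+bp)*(B2 + cm*A2)) ((1+bp)*(B1 + cm*A1) - (C1 + bp*A1)*(1+cm)) ((C1 + bp*A1)*(B2 + cm*A2) - (C2 + bp*A2)*(B1 + cm*A1))
  ((A2 + cp*B2)*(1+am) - (1+cp)*(C2 + am*B2)) ((1+cp)*(C1 + am*B1) - (A1 + cp*B1)*(1+am)) ((A1 + cp*B1)*(C2 + am*B2) - (A2 + cp*B2)*(C1 + am*B1))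
  ((B2 + ap*C2)*(1+bm) - (1+ap)*(A2 + bm*C2)) ((1+ap)*(A1 + bm*C1) - (B1 + ap*C1)*(1+bm)) ((B1 + ap*C1)*(A2 + bm*C2) - (B2 + ap*C2)*(A1 + bm*C1))
  = ((B1-A1)*(C2-A2) - (B2-A2)*(C1-A1))^2 * (ap*bp*cp + am*bm*cm - 1 + ap*am + bp*bm + cp*cm)"
  unfolding det3_def by algebra

lemma det3_scale: "det3 (k*a1) (k*b1) (k*c1) (l*a2) (l*b2) (l*c2) (m*a3) (m*b3) (m*c3) = k*l*m*det3 a1 b1 c1 a2 b2 c2 a3 b3 c3"
  unfolding det3_def by algebra

lemma hom:
  assumes "(\<alpha>::real) \<noteq> 0" "\<beta> \<noteq> 0" "\<alpha>*P$1 = p1" "\<alpha>*P$2 = p2" "\<beta>*Q$1 = q1" "\<beta>*Q$2 = q2"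
  shows "(\<alpha>*\<beta>)*la P Q = p2*\<beta> - \<alpha>*q2 \<and> (\<alpha>*\<beta>)*lb P Q = \<alpha>*q1 - p1*\<beta> \<and> (\<alpha>*\<beta>)*lc P Q = p1*q2 - p2*q1"
  unfolding assms(3-6)[symmetric] la_def lb_def lc_def by (auto simp: algebra_simps)

lemma sr_comp:
  assumes "P \<noteq> Q" "X \<in> line P Q" "X \<noteq> Q"
  shows "(1 + sratio P X Q) * X$1 = P$1 + sratio P X Q * Q$1 \<and>
         (1 + sratio P X Q) * X$2 = P$2 + sratio P X Q * Q$2 \<and> 1 + sratio P X Q \<noteq> 0"
proof -
  have h: "X - P = sratio P X Q *\<^sub>R (Q - X)" "1 + sratio P X Q \<noteq> 0"
    using sratio_prop[OF assms] by auto
  have "X$1 - P$1 = sratio P X Q * (Q$1 - X$1)" "X$2 - P$2 = sratio P X Q * (Q$2 - X$2)"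
    using arg_cong[OF h(1), of "\<lambda>v. v$1"] arg_cong[OF h(1), of "\<lambda>v. v$2"] by auto
  then show ?thesis using h(2) by (auto simp: algebra_simps)
qed

lemma ncolD: "\<not> collinear {A, B, C::point} \<Longrightarrow> (B$1-A$1)*(C$2-A$2) - (B$2-A$2)*(C$1-A$1) \<noteq> 0"
  using collinear_3[of A B C] col2 by (auto simp: algebra_simps)

lemma dist_real:
  fixes s t x1 x2 A1 A2 ba bb C1 C2 :: real
  assumes "(1+s) * x1 = C1 + s*A1" "(1+s) * x2 = C2 + s*A2"
    "(1+t) * x1 = ba + t*A1" "(1+t) * x2 = bb + t*A2"
  shows "(1+t)*((ba-A1)*(C2-A2) - (bb-A2)*(C1-A1)) = 0"
proof -
  have e1: "(1+t)*(C1 + s*A1) = (1+s)*(ba + t*A1)" using assms(1,3) by (metis mult.left_commute)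
  have e2: "(1+t)*(C2 + s*A2) = (1+s)*(bb + t*A2)" using assms(2,4) by (metis mult.left_commute)
  have f1: "(1+t)*(C1-A1) = (1+s)*(ba-A1)" using e1 by (simp add: algebra_simps)
  have f2: "(1+t)*(C2-A2) = (1+s)*(bb-A2)" using e2 by (simp add: algebra_simps)
  have "(1+t)*((ba-A1)*(C2-A2) - (bb-A2)*(C1-A1)) = (ba-A1)*((1+t)*(C2-A2)) - (bb-A2)*((1+t)*(C1-A1))"
    by (simp add: algebra_simps)
  also have "\<dots> = 0" unfolding f1 f2 by (simp add: algebra_simps)
  finally show ?thesis .
qed

lemma dist_lem:
  fixes X Y :: point
  assumes "\<not> collinear {A, B, C::point}" "1 + s \<noteq> 0" "1 + t \<noteq> 0"
    "(1+s) * X$1 = C$1 + s*A$1" "(1+s) * X$2 = C$2 + s*A$2"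
    "(1+t) * Y$1 = B$1 + t*A$1" "(1+t) * Y$2 = B$2 + t*A$2"
  shows "X \<noteq> Y"
proof
  assume "X = Y"
  then have "(1+t)*((B$1-A$1)*(C$2-A$2) - (B$2-A$2)*(C$1-A$1)) = 0"
    using dist_real[OF assms(4,5), where t=t and ba="B$1" and bb="B$2"] assms(6,7) by simp
  then show False using assms(2,3) ncolD[OF assms(1)] by simp
qed

theorem theorem3:
  fixes A B C Ap Am Bp Bm Cp Cm :: point
  assumes ncol: "\<not> collinear {A, B, C}"
    and onA: "Ap \<in> line B C" "Am \<in> line B C"
    and onB: "Bp \<in> line C A" "Bm \<in> line C A"
    and onC: "Cp \<in> line A B" "Cm \<in> line A B"
    and ne: "Ap \<noteq> C" "Am \<noteq> B" "Bp \<noteq> A" "Bm \<noteq> C" "Cp \<noteq> B" "Cm \<noteq> A"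
  defines "ap \<equiv> sratio B Ap C" and "bp \<equiv> sratio C Bp A" and "cp \<equiv> sratio A Cp B"
    and "am \<equiv> sratio C Am B" and "bm \<equiv> sratio A Bm C" and "cm \<equiv> sratio B Cm A"
  shows "Bp \<noteq> Cm \<and> Cp \<noteq> Am \<and> Ap \<noteq> Bm \<and>
    (proj_concurrent Bp Cm Cp Am Ap Bm \<longleftrightarrow>
      ap * bp * cp + am * bm * cm = 1 - ap * am - bp * bm - cp * cm)"
proof -
  have AB: "A \<noteq> B" and BC: "B \<noteq> C" and CA: "C \<noteq> A"
    using ncol by (auto simp: collinear_2 insert_commute)
  have lsym: "line P Q = line Q P" for P Q unfolding line_def by (simp add: insert_commute)
  note sAp = sr_comp[OF BC onA(1) ne(1), folded ap_def]
  note sAm = sr_comp[OF BC[symmetric] onA(2)[unfolded lsym[of B C]] ne(2), folded am_def]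
  note sBp = sr_comp[OF CA onB(1) ne(3), folded bp_def]
  note sBm = sr_comp[OF CA[symmetric] onB(2)[unfolded lsym[of C A]] ne(4), folded bm_def]
  note sCp = sr_comp[OF AB onC(1) ne(5), folded cp_def]
  note sCm = sr_comp[OF AB[symmetric] onC(2)[unfolded lsym[of A B]] ne(6), folded cm_def]
  have d1: "Bp \<noteq> Cm"
    using dist_lem[OF ncol, of bp cm Bp Cm] sBp sCm by auto
  have ncol2: "\<not> collinear {B, A, C}" using ncol by (simp add: insert_commute)
  have d2: "Cp \<noteq> Am"
    using dist_lem[OF ncol2, of am cp Am Cp] sAm sCp by auto
  have ncol3: "\<not> collinear {C, A, B}" using ncol by (simp add: insert_commute)
  have d3: "Ap \<noteq> Bm"
    using dist_lem[OF ncol3, of ap bm Ap Bm] sAp sBm by auto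
  define D where "D = (B$1-A$1)*(C$2-A$2) - (B$2-A$2)*(C$1-A$1)"
  have D: "D \<noteq> 0" unfolding D_def by (rule ncolD[OF ncol])
  note h1' = hom[OF conjunct2[OF conjunct2[OF sBp]] conjunct2[OF conjunct2[OF sCm]] conjunct1[OF sBp] conjunct1[OF conjunct2[OF sBp]] conjunct1[OF sCm] conjunct1[OF conjunct2[OF sCm]]]
  note h2' = hom[OF conjunct2[OF conjunct2[OF sCp]] conjunct2[OF conjunct2[OF sAm]] conjunct1[OF sCp] conjunct1[OF conjunct2[OF sCp]] conjunct1[OF sAm] conjunct1[OF conjunct2[OF sAm]]]
  note h3' = hom[OF conjunct2[OF conjunct2[OF sAp]] conjunct2[OF conjunct2[OF sBm]] conjunct1[OF sAp] conjunct1[OF conjunct2[OF sAp]] conjunct1[OF sBm] conjunct1[OF conjunct2[OF sBm]]]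
  define k where "k = ((1+bp)*(1+cm)) * ((1+cp)*(1+am)) * ((1+ap)*(1+bm))"
  have k: "k \<noteq> 0" unfolding k_def using sAp sAm sBp sBm sCp sCm by auto
  have "k * det3 (la Bp Cm) (lb Bp Cm) (lc Bp Cm) (la Cp Am) (lb Cp Am) (lc Cp Am) (la Ap Bm) (lb Ap Bm) (lc Ap Bm)
     = D^2 * (ap*bp*cp + am*bm*cm - 1 + ap*am + bp*bm + cp*cm)"
    unfolding k_def det3_scale[symmetric] h1'[THEN conjunct1] h1'[THEN conjunct2, THEN conjunct1]
      h1'[THEN conjunct2, THEN conjunct2] h2'[THEN conjunct1] h2'[THEN conjunct2, THEN conjunct1]
      h2'[THEN conjunct2, THEN conjunct2] h3'[THEN conjunct1] h3'[THEN conjunct2, THEN conjunct1]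
      h3'[THEN conjunct2, THEN conjunct2] D_def
    by (rule poly_id)
  then have "det3 (la Bp Cm) (lb Bp Cm) (lc Bp Cm) (la Cp Am) (lb Cp Am) (lc Cp Am) (la Ap Bm) (lb Ap Bm) (lc Ap Bm) = 0
     \<longleftrightarrow> ap*bp*cp + am*bm*cm - 1 + ap*am + bp*bm + cp*cm = 0"
    using k D by (metis mult_eq_0_iff power_eq_0_iff zero_neq_numeral)
  then show ?thesis using conc[OF d1 d2 d3] d1 d2 d3 by auto
qed

end
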